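(* Let $(X,\mathcal{A})$ be a measurable space, $f,g\in\mathcal{F}_{[0,1]}^{(X,\mathcal{A})}$ comonotone, $\star:[0,1]^2\to[0,1]$ continuous and non-decreasing in both arguments, and let the semicopula $\circledast$ be a continuous t-norm. Let $\alpha,\beta,\gamma,\lambda,\upsilon,\tau\in(0,\infty)$ satisfy $0<\alpha\lambda\le1$, $1\le\beta\upsilon<\infty$, $1\le\gamma\tau<\infty$, $\lambda\le\tau$, $\lambda\le\upsilon$, $\alpha\le\beta$, $\alpha\le\gamma$, and assume that $(\cdot)^{\alpha}$ is superdistributive over $\circledast$ and that $\circledast^{\lambda}$ dominates $\circledast$. Then for every monotone measure $m$ on $(X,\mathcal{A})$ with $m(X)=1$, \[ \big[\mathbf{I}_\circledast(m,(f\circledast g)^{\alpha})\big]^{\lambda}\ \ge\ \big[\mathbf{I}_\circledast(m,f^{\beta})\big]^{\upsilon}\circledast\big[\mathbf{I}_\circledast(m,g^{\gamma})\big]^{\tau}, \] where $(f\circledast g)(x)=f(x)\circledast g(x)$.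
   Context: A monotone measure on $(X,\mathcal{A})$ is $m:\mathcal{A}\to[0,\infty]$ with $m(\emptyset)=0$, $m(X)>0$, $m(A)\le m(B)$ for $A\subseteq B$. $\mathcal{F}_{[0,1]}^{(X,\mathcal{A})}$ is the set of $\mathcal{A}$-measurable $f:X\to[0,1]$. A semicopula is $\circledast:[0,1]^2\to[0,1]$, non-decreasing in both components, with neutral element $1$ and $a\circledast b\le\min(a,b)$; a t-norm is an associative commutative semicopula. $\mathbf{I}_\circledast(m,f)=\sup\{t\circledast m(\{f\ge t\}) : t\in[0,1]\}$. $(\cdot)^\alpha$ superdistributive over $\circledast$ means $(x\circledast y)^\alpha\ge x^\alpha\circledast y^\alpha$ for all $x,y$. For binary operations $A,B$, $A$ dominates $B$ if $A(B(a,b),B(c,d))\ge B(A(a,c),A(b,d))$ for all $a,b,c,d$; $\circledast^{\lambda}$ denotes the operation $(x,y)\mapsto(x\circledast y)^{\lambda}$. $f,g$ are comonotone if $(f(x)-f(y))(g(x)-g(y))\ge0$ for all $x,y$. *)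

theory Defs
  imports "HOL-Analysis.Analysis"
begin

definition monotone_measure :: "'a measure \<Rightarrow> ('a set \<Rightarrow> ennreal) \<Rightarrow> bool" where
  "monotone_measure M m \<longleftrightarrow>
     m {} = 0 \<and> m (space M) > 0 \<and>
     (\<forall>A\<in>sets M. \<forall>B\<in>sets M. A \<subseteq> B \<longrightarrow> m A \<le> m B)"

definition F01 :: "'a measure \<Rightarrow> ('a \<Rightarrow> real) set" where
  "F01 M = {f. f \<in> borel_measurable M \<and> (\<forall>x\<in>space M. f x \<in> {0..1})}"

definition semicopula :: "(real \<Rightarrow> real \<Rightarrow> real) \<Rightarrow> bool" where
  "semicopula S \<longleftrightarrow>
     (\<forall>x\<in>{0..1}. \<forall>y\<in>{0..1}. S x y \<in> {0..1}) \<and>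
     (\<forall>x\<in>{0..1}. \<forall>x'\<in>{0..1}. \<forall>y\<in>{0..1}. \<forall>y'\<in>{0..1}.
        x \<le> x' \<longrightarrow> y \<le> y' \<longrightarrow> S x y \<le> S x' y') \<and>
     (\<forall>x\<in>{0..1}. S x 1 = x \<and> S 1 x = x) \<and>
     (\<forall>x\<in>{0..1}. \<forall>y\<in>{0..1}. S x y \<le> min x y)"

definition tnorm :: "(real \<Rightarrow> real \<Rightarrow> real) \<Rightarrow> bool" where
  "tnorm S \<longleftrightarrow> semicopula S \<and>
     (\<forall>x\<in>{0..1}. \<forall>y\<in>{0..1}. \<forall>z\<in>{0..1}. S (S x y) z = S x (S y z)) \<and>
     (\<forall>x\<in>{0..1}. \<forall>y\<in>{0..1}. S x y = S y x)"

definition continuous_op :: "(real \<Rightarrow> real \<Rightarrow> real) \<Rightarrow> bool" where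
  "continuous_op S \<longleftrightarrow> continuous_on ({0..1} \<times> {0..1}) (\<lambda>(x, y). S x y)"

definition nondecreasing_op :: "(real \<Rightarrow> real \<Rightarrow> real) \<Rightarrow> bool" where
  "nondecreasing_op S \<longleftrightarrow>
     (\<forall>x\<in>{0..1}. \<forall>x'\<in>{0..1}. \<forall>y\<in>{0..1}. \<forall>y'\<in>{0..1}.
        x \<le> x' \<longrightarrow> y \<le> y' \<longrightarrow> S x y \<le> S x' y')"

text \<open>Seminormed-type integral I_S(m,f) = sup_{t in [0,1]} S t (m {f >= t}).
  Under m(X)=1 all values m(A), A measurable, lie in [0,1], so enn2real is exact.\<close>
definition I_sc :: "(real \<Rightarrow> real \<Rightarrow> real) \<Rightarrow> 'a measure \<Rightarrow> ('a set \<Rightarrow> ennreal)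
                    \<Rightarrow> ('a \<Rightarrow> real) \<Rightarrow> real" where
  "I_sc S M m f = (SUP t\<in>{0..1}. S t (enn2real (m {x\<in>space M. f x \<ge> t})))"

definition superdistributive_pow :: "real \<Rightarrow> (real \<Rightarrow> real \<Rightarrow> real) \<Rightarrow> bool" where
  "superdistributive_pow a S \<longleftrightarrow>
     (\<forall>x\<in>{0..1}. \<forall>y\<in>{0..1}. (S x y) powr a \<ge> S (x powr a) (y powr a))"

definition dominates :: "(real \<Rightarrow> real \<Rightarrow> real) \<Rightarrow> (real \<Rightarrow> real \<Rightarrow> real) \<Rightarrow> bool" where
  "dominates A B \<longleftrightarrow>
     (\<forall>a\<in>{0..1}. \<forall>b\<in>{0..1}. \<forall>c\<in>{0..1}. \<forall>d\<in>{0..1}.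
        A (B a b) (B c d) \<ge> B (A a c) (A b d))"

definition comonotone :: "'a set \<Rightarrow> ('a \<Rightarrow> real) \<Rightarrow> ('a \<Rightarrow> real) \<Rightarrow> bool" where
  "comonotone X f g \<longleftrightarrow> (\<forall>x\<in>X. \<forall>y\<in>X. (f x - f y) * (g x - g y) \<ge> 0)"

end

theory Submission imports Defs begin

lemma meas_S:
  assumes "continuous_op S" "f \<in> F01 M" "g \<in> F01 M"
  shows "(\<lambda>x. S (f x) (g x)) \<in> borel_measurable M"
proof -
  define cl where "cl = (\<lambda>t::real. max 0 (min 1 t))"
  have clc: "continuous_on UNIV cl" unfolding cl_def by (intro continuous_intros)
  have "continuous_on UNIV (\<lambda>p. (\<lambda>(x,y). S x y) (cl (fst p), cl (snd p)))"
  proof (rule continuous_on_compose2[where t="{0..1}\<times>{0..1}"])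
    show "continuous_on ({0..1}\<times>{0..1}) (\<lambda>(x,y). S x y)" using assms(1) unfolding continuous_op_def by (simp add: case_prod_unfold)
    show "continuous_on UNIV (\<lambda>p. (cl (fst p), cl (snd p)))"
      unfolding cl_def by (intro continuous_intros)
    show "(\<lambda>p. (cl (fst p), cl (snd p))) ` UNIV \<subseteq> {0..1}\<times>{0..1}" unfolding cl_def by auto
  qed
  moreover have "(\<lambda>x. (f x, g x)) \<in> borel_measurable M"
    using assms(2,3) unfolding F01_def by (intro borel_measurable_Pair) auto
  ultimately have "(\<lambda>x. (\<lambda>p. (\<lambda>(x,y). S x y) (cl (fst p), cl (snd p))) (f x, g x)) \<in> borel_measurable M"
    by (rule borel_measurable_continuous_on)
  moreover have "\<And>x. x \<in> space M \<Longrightarrow> (\<lambda>p. (\<lambda>(x,y). S x y) (cl (fst p), cl (snd p))) (f x, g x) = S (f x) (g x)"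
    using assms(2,3) unfolding F01_def cl_def by auto
  ultimately show ?thesis using measurable_cong by (smt (verit, best))
qed

lemma sup_cont_le:
  fixes P :: "real \<Rightarrow> real"
  assumes "continuous_on {0..1} P" "X \<subseteq> {0..1}" "X \<noteq> {}" "\<forall>x\<in>X. P x \<le> K"
  shows "P (Sup X) \<le> K"
proof -
  have bdd: "bdd_above X" using assms(2) by (meson atLeastAtMost_iff bdd_above.unfold subset_eq)
  have cl: "closed ({0..1} \<inter> P -` {..K})"
    by (rule continuous_closed_preimage[OF assms(1)]) auto
  have "X \<subseteq> {0..1} \<inter> P -` {..K}" using assms by auto
  hence "closure X \<subseteq> {0..1} \<inter> P -` {..K}" using closure_minimal[OF _ cl] by blast
  with closure_contains_Sup[OF assms(3) bdd] show ?thesis by auto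
qed


lemma pow_le1: "0 \<le> (x::real) \<Longrightarrow> x \<le> 1 \<Longrightarrow> 0 \<le> e \<Longrightarrow> x powr e \<le> 1"
  by (rule powr_le1) auto

lemma pow01: "x \<in> {0..1} \<Longrightarrow> (e::real) \<ge> 0 \<Longrightarrow> x powr e \<in> {0..1}"
  by (auto intro: pow_le1)

lemma cont1:
  assumes "continuous_op S" "y \<in> {0..1}" "(e::real) > 0"
  shows "continuous_on {0..1} (\<lambda>x. S (x powr e) y)"
proof -
  have "continuous_on {0..1} (\<lambda>x. (\<lambda>(x,y). S x y) (x powr e, y))"
  proof (rule continuous_on_compose2[where t="{0..1}\<times>{0..1}"])
    show "continuous_on ({0..1}\<times>{0..1}) (\<lambda>(x,y). S x y)" using assms(1) unfolding continuous_op_def by (simp add: case_prod_unfold)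
    show "continuous_on {0..1} (\<lambda>x. (x powr e, y))"
      using assms(3) by (intro continuous_on_Pair continuous_on_powr' continuous_intros) auto
    show "(\<lambda>x. (x powr e, y)) ` {0..1} \<subseteq> {0..1}\<times>{0..1}" using assms(2,3) by (auto intro!: pow_le1)
  qed
  thus ?thesis by simp
qed

lemma cont2:
  assumes "continuous_op S" "x \<in> {0..1}" "(e::real) > 0"
  shows "continuous_on {0..1} (\<lambda>y. S x (y powr e))"
proof -
  have "continuous_on {0..1} (\<lambda>y. (\<lambda>(x,y). S x y) (x, y powr e))"
  proof (rule continuous_on_compose2[where t="{0..1}\<times>{0..1}"])
    show "continuous_on ({0..1}\<times>{0..1}) (\<lambda>(x,y). S x y)" using assms(1) unfolding continuous_op_def by (simp add: case_prod_unfold)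
    show "continuous_on {0..1} (\<lambda>y. (x, y powr e))"
      using assms(3) by (intro continuous_on_Pair continuous_on_powr' continuous_intros) auto
    show "(\<lambda>y. (x, y powr e)) ` {0..1} \<subseteq> {0..1}\<times>{0..1}" using assms(2,3) by (auto intro!: pow_le1)
  qed
  thus ?thesis by simp
qed

theorem corollary3p16:
  fixes M :: "'a measure" and f g :: "'a \<Rightarrow> real"
    and star S :: "real \<Rightarrow> real \<Rightarrow> real"
    and \<alpha> \<beta> \<gamma> lam \<upsilon> \<tau> :: real
  assumes "f \<in> F01 M" and "g \<in> F01 M"
    and "comonotone (space M) f g"
    and "continuous_op star" and "nondecreasing_op star"
    and "tnorm S" and "continuous_op S"
    and "\<alpha> > 0" "\<beta> > 0" "\<gamma> > 0" "lam > 0" "\<upsilon> > 0" "\<tau> > 0"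
    and "\<alpha> * lam \<le> 1" and "1 \<le> \<beta> * \<upsilon>" and "1 \<le> \<gamma> * \<tau>"
    and "lam \<le> \<tau>" and "lam \<le> \<upsilon>" and "\<alpha> \<le> \<beta>" and "\<alpha> \<le> \<gamma>"
    and "superdistributive_pow \<alpha> S"
    and "dominates (\<lambda>x y. (S x y) powr lam) S"
  shows "\<forall>m. monotone_measure M m \<and> m (space M) = 1 \<longrightarrow>
           (I_sc S M m (\<lambda>x. (S (f x) (g x)) powr \<alpha>)) powr lam \<ge>
           S ((I_sc S M m (\<lambda>x. f x powr \<beta>)) powr \<upsilon>) ((I_sc S M m (\<lambda>x. g x powr \<gamma>)) powr \<tau>)"
proof (intro allI impI)
  fix m assume mm: "monotone_measure M m \<and> m (space M) = 1"
  have T1: "\<forall>x\<in>{0..1}. \<forall>y\<in>{0..1}. S x y \<in> {0..1}"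
   and T2: "\<forall>x\<in>{0..1}. \<forall>x'\<in>{0..1}. \<forall>y\<in>{0..1}. \<forall>y'\<in>{0..1}. x \<le> x' \<longrightarrow> y \<le> y' \<longrightarrow> S x y \<le> S x' y'"
   and T3: "\<forall>x\<in>{0..1}. S x 1 = x \<and> S 1 x = x"
   and T4: "\<forall>x\<in>{0..1}. \<forall>y\<in>{0..1}. S x y \<le> min x y"
   and T5: "\<forall>x\<in>{0..1}. \<forall>y\<in>{0..1}. \<forall>z\<in>{0..1}. S (S x y) z = S x (S y z)"
   and T6: "\<forall>x\<in>{0..1}. \<forall>y\<in>{0..1}. S x y = S y x"
    using assms(6) unfolding tnorm_def semicopula_def by blast+
  have S01: "\<And>x y. x\<in>{0..1} \<Longrightarrow> y\<in>{0..1} \<Longrightarrow> S x y \<in> {0..1}" using T1 by blast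
  have Smono: "\<And>x x' y y'. x\<in>{0..1} \<Longrightarrow> x'\<in>{0..1} \<Longrightarrow> y\<in>{0..1} \<Longrightarrow> y'\<in>{0..1} \<Longrightarrow>
     x \<le> x' \<Longrightarrow> y \<le> y' \<Longrightarrow> S x y \<le> S x' y'" using T2 by blast
  have S1: "\<And>x. x\<in>{0..1} \<Longrightarrow> S x 1 = x" "\<And>x. x\<in>{0..1} \<Longrightarrow> S 1 x = x" using T3 by blast+
  have Smin: "\<And>x y. x\<in>{0..1} \<Longrightarrow> y\<in>{0..1} \<Longrightarrow> S x y \<le> x \<and> S x y \<le> y" using T4 by fastforce
  have Sassoc: "\<And>x y z. x\<in>{0..1} \<Longrightarrow> y\<in>{0..1} \<Longrightarrow> z\<in>{0..1} \<Longrightarrow> S (S x y) z = S x (S y z)" using T5 by blast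
  have Scomm: "\<And>x y. x\<in>{0..1} \<Longrightarrow> y\<in>{0..1} \<Longrightarrow> S x y = S y x" using T6 by blast
  have mmono: "\<And>A B. A \<in> sets M \<Longrightarrow> B \<in> sets M \<Longrightarrow> A \<subseteq> B \<Longrightarrow> m A \<le> m B"
    using mm unfolding monotone_measure_def by blast
  have m1: "m (space M) = 1" using mm by blast
  define L where "L h t = enn2real (m {x\<in>space M. t \<le> h x})" for h :: "'a \<Rightarrow> real" and t
  have Isc: "\<And>h. I_sc S M m h = (SUP t\<in>{0..1}. S t (L h t))" unfolding I_sc_def L_def by simp
  have mle1: "\<And>A. A \<in> sets M \<Longrightarrow> m A \<le> 1" using mmono[OF _ sets.top] m1 sets.sets_into_space by metis
  have enn01: "\<And>A. A \<in> sets M \<Longrightarrow> enn2real (m A) \<in> {0..1}"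
    using mle1 by (auto intro: enn2real_leI)
  have Lr: "\<And>h t. h \<in> borel_measurable M \<Longrightarrow> L h t \<in> {0..1}"
    unfolding L_def by (rule enn01) measurable
  have fm: "f \<in> borel_measurable M" "g \<in> borel_measurable M" using assms(1,2) unfolding F01_def by auto
  have f01: "\<And>x. x \<in> space M \<Longrightarrow> f x \<in> {0..1}" "\<And>x. x \<in> space M \<Longrightarrow> g x \<in> {0..1}"
    using assms(1,2) unfolding F01_def by auto
  define F where "F = (\<lambda>x. f x powr \<beta>)"
  define G where "G = (\<lambda>x. g x powr \<gamma>)"
  define H where "H = (\<lambda>x. (S (f x) (g x)) powr \<alpha>)"
  have Fm: "F \<in> borel_measurable M" unfolding F_def using fm by measurable
  have Gm: "G \<in> borel_measurable M" unfolding G_def using fm by measurable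
  have Sm: "(\<lambda>x. S (f x) (g x)) \<in> borel_measurable M" by (rule meas_S[OF assms(7,1,2)])
  have Hm: "H \<in> borel_measurable M" unfolding H_def using Sm by measurable
  have phi01: "\<And>h t. h \<in> borel_measurable M \<Longrightarrow> t \<in> {0..1} \<Longrightarrow> S t (L h t) \<in> {0..1}"
    using S01 Lr by blast
  have bdd: "\<And>h. h \<in> borel_measurable M \<Longrightarrow> bdd_above ((\<lambda>t. S t (L h t)) ` {0..1})"
    using phi01 by (intro bdd_aboveI[where M=1]) auto
  have I01: "\<And>h. h \<in> borel_measurable M \<Longrightarrow> (SUP t\<in>{0..1}. S t (L h t)) \<in> {0..1}"
  proof -
    fix h :: "'a \<Rightarrow> real" assume h: "h \<in> borel_measurable M"
    have "S 0 (L h 0) \<le> (SUP t\<in>{0..1}. S t (L h t))" by (rule cSUP_upper[OF _ bdd[OF h]]) auto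
    moreover have "S 0 (L h 0) \<ge> 0" using phi01[OF h, of 0] by auto
    moreover have "(SUP t\<in>{0..1}. S t (L h t)) \<le> 1" using phi01[OF h] by (intro cSUP_least) auto
    ultimately show "(SUP t\<in>{0..1}. S t (L h t)) \<in> {0..1}" by auto
  qed
  define A where "A = (SUP t\<in>{0..1}. S t (L H t))"
  have A01: "A \<in> {0..1}" unfolding A_def using I01[OF Hm] .
  have key: "S ((S s (L F s)) powr \<upsilon>) ((S u (L G u)) powr \<tau>) \<le> A powr lam"
    if s: "s \<in> {0..1}" and u: "u \<in> {0..1}" for s u
  proof -
    define p where "p = L F s"
    define q where "q = L G u"
    have p: "p \<in> {0..1}" and q: "q \<in> {0..1}" unfolding p_def q_def using Lr Fm Gm by auto
    define a where "a = S s p"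
    define c where "c = S u q"
    have a: "a \<in> {0..1}" and c: "c \<in> {0..1}" unfolding a_def c_def using S01 s u p q by auto
    have st1: "S (a powr \<upsilon>) (c powr \<tau>) \<le> S (a powr lam) (c powr lam)"
    proof (rule Smono)
      show "a powr \<upsilon> \<in> {0..1}" "c powr \<tau> \<in> {0..1}" "a powr lam \<in> {0..1}" "c powr lam \<in> {0..1}"
        using a c assms(11-13) by (auto intro!: pow_le1)
      show "a powr \<upsilon> \<le> a powr lam" using a assms(18) by (intro powr_mono') auto
      show "c powr \<tau> \<le> c powr lam" using c assms(17) by (intro powr_mono') auto
    qed
    have st2: "S (a powr lam) (c powr lam) \<le> (S a c) powr lam"
    proof -
      have one: "(1::real) \<in> {0..1}" by simp
      have "(S (S a 1) (S 1 c)) powr lam \<ge> S ((S a 1) powr lam) ((S 1 c) powr lam)"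
        using assms(22)[unfolded dominates_def, rule_format, OF a one one c] by simp
      thus ?thesis using S1 a c by simp
    qed
    have st3: "S a c = S (S s u) (S p q)"
    proof -
      have "S a c = S s (S p (S u q))" unfolding a_def c_def using Sassoc S01 s p u q by simp
      also have "S p (S u q) = S (S p u) q" using Sassoc s p u q by simp
      also have "S p u = S u p" using Scomm p u by simp
      also have "S (S u p) q = S u (S p q)" using Sassoc p u q by simp
      also have "S s (S u (S p q)) = S (S s u) (S p q)" using Sassoc S01 s u p q by simp
      finally show ?thesis .
    qed
    define LF where "LF = {x\<in>space M. s \<le> F x}"
    define LG where "LG = {x\<in>space M. u \<le> G x}"
    have LFm: "LF \<in> sets M" unfolding LF_def using Fm by measurable
    have LGm: "LG \<in> sets M" unfolding LG_def using Gm by measurable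
    have nest: "LF \<subseteq> LG \<or> LG \<subseteq> LF"
    proof (rule ccontr)
      assume "\<not> (LF \<subseteq> LG \<or> LG \<subseteq> LF)"
      then obtain x y where x: "x \<in> LF" "x \<notin> LG" and y: "y \<in> LG" "y \<notin> LF" by blast
      have xs: "x \<in> space M" and ys: "y \<in> space M" using x y unfolding LF_def LG_def by auto
      have "f y powr \<beta> < f x powr \<beta>" using x y unfolding LF_def LG_def F_def by auto
      hence fxy: "f y < f x" using powr_mono2[of \<beta> "f x" "f y"] f01 xs ys assms(9) by force
      have "g x powr \<gamma> < g y powr \<gamma>" using x y unfolding LF_def LG_def G_def by auto
      hence gxy: "g x < g y" using powr_mono2[of \<gamma> "g y" "g x"] f01 xs ys assms(10) by force
      have "(f x - f y) * (g x - g y) < 0" using fxy gxy by (simp add: mult_pos_neg)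
      thus False using assms(3) xs ys unfolding comonotone_def by force
    qed
    define E where "E = LF \<inter> LG"
    have Em: "E \<in> sets M" unfolding E_def using LFm LGm by auto
    have pqE: "S p q \<le> enn2real (m E)"
    proof (cases "LF \<subseteq> LG")
      case True
      hence "E = LF" unfolding E_def by auto
      hence "enn2real (m E) = p" unfolding p_def L_def LF_def by simp
      thus ?thesis using Smin p q by auto
    next
      case False
      hence "E = LG" using nest unfolding E_def by auto
      hence "enn2real (m E) = q" unfolding q_def L_def LG_def by simp
      thus ?thesis using Smin p q by auto
    qed
    define t0 where "t0 = (S (s powr (1/\<beta>)) (u powr (1/\<gamma>))) powr \<alpha>"
    have sb: "s powr (1/\<beta>) \<in> {0..1}" "u powr (1/\<gamma>) \<in> {0..1}" using s u assms(9,10) by (auto intro!: pow_le1)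
    have t01: "t0 \<in> {0..1}" unfolding t0_def using S01[OF sb] assms(8) by (auto intro!: pow_le1)
    have sut0: "S s u \<le> t0"
    proof -
      have "S ((s powr (1/\<beta>)) powr \<alpha>) ((u powr (1/\<gamma>)) powr \<alpha>) \<le> t0"
        unfolding t0_def using assms(21)[unfolded superdistributive_pow_def, rule_format, OF sb] .
      moreover have "(s powr (1/\<beta>)) powr \<alpha> = s powr (\<alpha>/\<beta>)" "(u powr (1/\<gamma>)) powr \<alpha> = u powr (\<alpha>/\<gamma>)"
        by (simp_all add: powr_powr)
      moreover have "s \<le> s powr (\<alpha>/\<beta>)"
      proof -
        have "s powr 1 \<le> s powr (\<alpha>/\<beta>)" using s assms(7,9,19) by (intro powr_mono') auto
        thus ?thesis using s by (simp add: powr_one)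
      qed
      moreover have "u \<le> u powr (\<alpha>/\<gamma>)"
      proof -
        have "u powr 1 \<le> u powr (\<alpha>/\<gamma>)" using u assms(7,10,20) by (intro powr_mono') auto
        thus ?thesis using u by (simp add: powr_one)
      qed
      moreover have "s powr (\<alpha>/\<beta>) \<in> {0..1}" "u powr (\<alpha>/\<gamma>) \<in> {0..1}"
        using s u assms(8-10) by (auto intro!: pow_le1)
      ultimately show ?thesis using Smono[of s "s powr (\<alpha>/\<beta>)" u "u powr (\<alpha>/\<gamma>)"] s u by force
    qed
    define LH where "LH = {x\<in>space M. t0 \<le> H x}"
    have LHm: "LH \<in> sets M" unfolding LH_def using Hm by measurable
    have EH: "E \<subseteq> LH"
    proof
      fix x assume "x \<in> E"
      hence xs: "x \<in> space M" and fx: "s \<le> f x powr \<beta>" and gx: "u \<le> g x powr \<gamma>"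
        unfolding E_def LF_def LG_def F_def G_def by auto
      have "s powr (1/\<beta>) \<le> (f x powr \<beta>) powr (1/\<beta>)" using fx s assms(9) by (intro powr_mono2) auto
      also have "\<dots> = f x" using f01[OF xs] assms(9) by (simp add: powr_powr powr_one)
      finally have 1: "s powr (1/\<beta>) \<le> f x" .
      have "u powr (1/\<gamma>) \<le> (g x powr \<gamma>) powr (1/\<gamma>)" using gx u assms(10) by (intro powr_mono2) auto
      also have "\<dots> = g x" using f01[OF xs] assms(10) by (simp add: powr_powr powr_one)
      finally have 2: "u powr (1/\<gamma>) \<le> g x" .
      have "S (s powr (1/\<beta>)) (u powr (1/\<gamma>)) \<le> S (f x) (g x)"
        using Smono[OF sb(1) f01(1)[OF xs] sb(2) f01(2)[OF xs] 1 2] .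
      hence "t0 \<le> H x" unfolding t0_def H_def using S01[OF sb] assms(8) by (intro powr_mono2) auto
      thus "x \<in> LH" unfolding LH_def using xs by auto
    qed
    have "enn2real (m E) \<le> enn2real (m LH)"
      using mmono[OF Em LHm EH] mle1[OF LHm] by (intro enn2real_mono) (auto intro: order.strict_trans1[OF _ ennreal_one_less_top])
    hence EL: "enn2real (m E) \<le> L H t0" unfolding L_def LH_def .
    have st4: "S (S s u) (S p q) \<le> S t0 (L H t0)"
      using Smono[OF S01[OF s u] t01 S01[OF p q] Lr[OF Hm, of t0] sut0] pqE EL by linarith
    have "S t0 (L H t0) \<le> A" unfolding A_def using t01 by (intro cSUP_upper bdd[OF Hm])
    hence "S a c \<le> A" using st3 st4 by linarith
    hence "(S a c) powr lam \<le> A powr lam" using S01[OF a c] assms(11) by (intro powr_mono2) auto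
    thus ?thesis using st1 st2 unfolding a_def c_def p_def q_def by linarith
  qed
  have fin: "A powr lam \<ge> S ((SUP t\<in>{0..1}. S t (L F t)) powr \<upsilon>) ((SUP t\<in>{0..1}. S t (L G t)) powr \<tau>)"
  proof -
    define BF where "BF = (SUP t\<in>{0..1}. S t (L F t))"
    define BG where "BG = (SUP t\<in>{0..1}. S t (L G t))"
    have BF: "BF \<in> {0..1}" unfolding BF_def using I01[OF Fm] .
    have step1: "S (BF powr \<upsilon>) ((S u (L G u)) powr \<tau>) \<le> A powr lam" if u: "u \<in> {0..1}" for u
    proof -
      have y: "(S u (L G u)) powr \<tau> \<in> {0..1}" using phi01[OF Gm u] assms(13) pow01 by auto
      show ?thesis unfolding BF_def
      proof (rule sup_cont_le[where P="\<lambda>x. S (x powr \<upsilon>) ((S u (L G u)) powr \<tau>)"])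
        show "continuous_on {0..1} (\<lambda>x. S (x powr \<upsilon>) ((S u (L G u)) powr \<tau>))"
          using cont1[OF assms(7) y assms(12)] .
        show "(\<lambda>t. S t (L F t)) ` {0..1} \<subseteq> {0..1}" using phi01[OF Fm] by auto
        show "(\<lambda>t. S t (L F t)) ` {0..1} \<noteq> {}" by auto
        show "\<forall>x\<in>(\<lambda>t. S t (L F t)) ` {0..1}. S (x powr \<upsilon>) ((S u (L G u)) powr \<tau>) \<le> A powr lam"
          using key u by auto
      qed
    qed
    have "S (BF powr \<upsilon>) (BG powr \<tau>) \<le> A powr lam" unfolding BG_def
    proof (rule sup_cont_le[where P="\<lambda>y. S (BF powr \<upsilon>) (y powr \<tau>)"])
      show "continuous_on {0..1} (\<lambda>y. S (BF powr \<upsilon>) (y powr \<tau>))"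
        using cont2[OF assms(7) pow01[OF BF] assms(13)] assms(12) by simp
      show "(\<lambda>t. S t (L G t)) ` {0..1} \<subseteq> {0..1}" using phi01[OF Gm] by auto
      show "(\<lambda>t. S t (L G t)) ` {0..1} \<noteq> {}" by auto
      show "\<forall>y\<in>(\<lambda>t. S t (L G t)) ` {0..1}. S (BF powr \<upsilon>) (y powr \<tau>) \<le> A powr lam"
        using step1 by auto
    qed
    thus ?thesis unfolding BF_def BG_def by simp
  qed
  then show "I_sc S M m (\<lambda>x. (S (f x) (g x)) powr \<alpha>) powr lam \<ge>
     S (I_sc S M m (\<lambda>x. f x powr \<beta>) powr \<upsilon>) (I_sc S M m (\<lambda>x. g x powr \<gamma>) powr \<tau>)"
    unfolding Isc A_def H_def F_def G_def .
qed

end
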